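(* Let $\alpha\in(0,1)$ and $\vartheta>0$, and let $M_\alpha(u_1,u_2)=\min\{u_1^{1-\alpha}u_2,\,u_1\}$ (Marshall–Olkin copula) and $C_\vartheta(u_1,u_2)=(u_1^{-\vartheta}+u_2^{-\vartheta}-1)^{-1/\vartheta}$ (Clayton copula). Then $\Lambda(\boldsymbol w;M_\alpha)=0<\Lambda(\boldsymbol w;C_\vartheta)$ for all $\boldsymbol w\in(0,\infty)^2$, so $M_\alpha<_{TD}C_\vartheta$, while $C_\vartheta(t,t^\alpha)<M_\alpha(t,t^\alpha)=t$ for all $t\in(0,1)$. In particular $M_\alpha\le_{loc}C_\vartheta$ fails, so $C_1<_{TD}C_2$ does not imply $C_1\le_{loc}C_2$ in general.
   Context: The tail dependence function of a $d$-copula $C$ is $\Lambda(\boldsymbol w;C)=\lim_{s\searrow0}C(s\boldsymbol w)/s$, $\boldsymbol w\in[0,\infty)^d$. $C_1<_{TD}C_2$ means $\Lambda(\boldsymbol w;C_1)<\Lambda(\boldsymbol w;C_2)$ for all $\boldsymbol w\in(0,\infty)^d$. $C_1\le_{loc}C_2$ means there is $\varepsilon>0$ with $C_1(\boldsymbol u)\le C_2(\boldsymbol u)$ for all $\boldsymbol u\in B_\varepsilon(\boldsymbol 0)\cap[0,1]^d$ (Euclidean ball). *)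

theory Defs
  imports "HOL-Analysis.Analysis"
begin

definition tail_dep :: "(real^'n \<Rightarrow> real) \<Rightarrow> real^'n \<Rightarrow> real" where
  "tail_dep C w = Lim (at_right 0) (\<lambda>s. C (s *\<^sub>R w) / s)"

definition less_TD :: "(real^'n \<Rightarrow> real) \<Rightarrow> (real^'n \<Rightarrow> real) \<Rightarrow> bool" where
  "less_TD C1 C2 \<longleftrightarrow> (\<forall>w. (\<forall>i. 0 < w $ i) \<longrightarrow> tail_dep C1 w < tail_dep C2 w)"

definition le_loc :: "(real^'n \<Rightarrow> real) \<Rightarrow> (real^'n \<Rightarrow> real) \<Rightarrow> bool" where
  "le_loc C1 C2 \<longleftrightarrow> (\<exists>\<epsilon>>0. \<forall>u. u \<in> ball 0 \<epsilon> \<and> (\<forall>i. 0 \<le> u $ i \<and> u $ i \<le> 1) \<longrightarrow> C1 u \<le> C2 u)"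

definition marshall_olkin :: "real \<Rightarrow> real^2 \<Rightarrow> real" where
  "marshall_olkin \<alpha> u = min ((u $ 1) powr (1 - \<alpha>) * (u $ 2)) (u $ 1)"

text \<open>Clayton copula C_theta(u1,u2) = (u1^-theta + u2^-theta - 1)^(-1/theta),
  extended by its continuous value 0 when a coordinate is 0.\<close>
definition clayton :: "real \<Rightarrow> real^2 \<Rightarrow> real" where
  "clayton \<theta> u = (if u $ 1 = 0 \<or> u $ 2 = 0 then 0
     else ((u $ 1) powr (- \<theta>) + (u $ 2) powr (- \<theta>) - 1) powr (- 1 / \<theta>))"

end

theory Submission
  imports Defs begin


lemma mo_eq:
  assumes "0 < s" "0 < w$1" "0 < w$2"
  shows "marshall_olkin a (s *\<^sub>R w) / s = min ((s * w$1) powr (1-a) * w$2) (w$1)"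
  using assms by (simp add: marshall_olkin_def min_divide_distrib_right)

lemma mo_lim:
  assumes "a < 1" "0 < w$1" "0 < w$2"
  shows "((\<lambda>s. marshall_olkin a (s *\<^sub>R w) / s) \<longlongrightarrow> 0) (at_right 0)"
proof -
  have ev: "\<forall>\<^sub>F s in at_right 0. min ((s * w$1) powr (1-a) * w$2) (w$1) = marshall_olkin a (s *\<^sub>R w) / s"
    using eventually_at_right_less[of 0] by eventually_elim (use assms mo_eq in auto)
  have "((\<lambda>s. (s * w$1) powr (1-a)) \<longlongrightarrow> 0) (at_right 0)"
    apply (rule tendsto_zero_powrI[where g="\<lambda>_. 1-a" and b="1-a"])
    using assms by (auto intro!: tendsto_eq_intros eventually_at_rightI[of 0 1])
  then have "((\<lambda>s. (s * w$1) powr (1-a) * w$2) \<longlongrightarrow> 0) (at_right 0)"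
    by (rule tendsto_mult_left_zero)
  then have "((\<lambda>s. min ((s * w$1) powr (1-a) * w$2) (w$1)) \<longlongrightarrow> min 0 (w$1)) (at_right 0)"
    by (intro tendsto_min) auto
  then show ?thesis using assms tendsto_cong[OF ev] by simp
qed

lemma cl_eq:
  assumes "0 < s" "0 < w$1" "0 < w$2" "0 < t"
   and g: "0 < (w$1) powr (-t) + (w$2) powr (-t) - s powr t"
  shows "clayton t (s *\<^sub>R w) / s = ((w$1) powr (-t) + (w$2) powr (-t) - s powr t) powr (-1/t)"
proof -
  let ?g = "(w$1) powr (-t) + (w$2) powr (-t) - s powr t"
  have "(s * w$1) powr (-t) + (s * w$2) powr (-t) - 1 = s powr (-t) * ?g"
    using assms by (simp add: powr_mult algebra_simps powr_minus field_simps)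
  then have "clayton t (s *\<^sub>R w) = (s powr (-t) * ?g) powr (-1/t)"
    using assms by (simp add: clayton_def)
  also have "\<dots> = (s powr (-t)) powr (-1/t) * ?g powr (-1/t)"
    using assms g by (simp add: powr_mult)
  also have "(s powr (-t)) powr (-1/t) = s"
    using assms by (simp add: powr_powr)
  finally show ?thesis using assms by simp
qed

lemma cl_lim:
  assumes "0 < t" "0 < w$1" "0 < w$2"
  shows "((\<lambda>s. clayton t (s *\<^sub>R w) / s) \<longlongrightarrow> ((w$1) powr (-t) + (w$2) powr (-t)) powr (-1/t)) (at_right 0)"
proof -
  let ?L = "(w$1) powr (-t) + (w$2) powr (-t)"
  define g where "g s = ?L - s powr t" for s
  have L: "0 < ?L" using assms by (intro add_pos_pos) auto
  have sp: "((\<lambda>s. s powr t) \<longlongrightarrow> 0) (at_right (0::real))"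
    apply (rule tendsto_zero_powrI)
    using assms by (auto intro!: tendsto_eq_intros eventually_at_rightI[of 0 1])
  have gl: "(g \<longlongrightarrow> ?L) (at_right 0)"
    unfolding g_def using tendsto_diff[OF tendsto_const sp, of ?L] by simp
  have "\<forall>\<^sub>F s in at_right 0. 0 < g s"
    using order_tendstoD(1)[OF gl L] .
  then have ev: "\<forall>\<^sub>F s in at_right 0. g s powr (-1/t) = clayton t (s *\<^sub>R w) / s"
    using eventually_at_right_less[of 0] by eventually_elim (use assms cl_eq in \<open>auto simp: g_def\<close>)
  have "((\<lambda>s. g s powr (-1/t)) \<longlongrightarrow> ?L powr (-1/t)) (at_right 0)"
    using L by (intro tendsto_powr gl tendsto_const) auto
  then show ?thesis using tendsto_cong[OF ev] by simp
qed

lemma cl_lt: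
  assumes "0 < a" "0 < th" "0 < t" "t < 1"
  shows "clayton th (vector [t, t powr a]) < t"
proof -
  have "1 < t powr (-(a*th))"
    using assms by (simp add: powr_minus one_less_inverse_iff powr01_less_one mult_pos_pos)
  then have lt: "t powr (-th) < t powr (-th) + (t powr a) powr (-th) - 1"
    by (simp add: powr_powr)
  have "clayton th (vector [t, t powr a]) = (t powr (-th) + (t powr a) powr (-th) - 1) powr (-1/th)"
    using assms by (simp add: clayton_def vector_2)
  also have "\<dots> < (t powr (-th)) powr (-1/th)"
    using assms lt by (intro powr_less_mono2_neg) auto
  also have "\<dots> = t" using assms by (simp add: powr_powr)
  finally show ?thesis .
qed

lemma mo_t:
  assumes "0 < t"
  shows "marshall_olkin a (vector [t, t powr a]) = t"
  using assms by (simp add: marshall_olkin_def vector_2 powr_add[symmetric])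

theorem mainTheorem4:
  fixes \<alpha> \<theta> :: real
  assumes "0 < \<alpha>" "\<alpha> < 1" "0 < \<theta>"
  shows "(\<forall>w::real^2. (\<forall>i. 0 < w $ i) \<longrightarrow>
            ((\<lambda>s. marshall_olkin \<alpha> (s *\<^sub>R w) / s) \<longlongrightarrow> tail_dep (marshall_olkin \<alpha>) w) (at_right 0)
          \<and> ((\<lambda>s. clayton \<theta> (s *\<^sub>R w) / s) \<longlongrightarrow> tail_dep (clayton \<theta>) w) (at_right 0)
          \<and> tail_dep (marshall_olkin \<alpha>) w = 0
          \<and> 0 < tail_dep (clayton \<theta>) w)
       \<and> less_TD (marshall_olkin \<alpha>) (clayton \<theta>)
       \<and> (\<forall>t. 0 < t \<and> t < 1 \<longrightarrow>
            clayton \<theta> (vector [t, t powr \<alpha>]) < marshall_olkin \<alpha> (vector [t, t powr \<alpha>])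
          \<and> marshall_olkin \<alpha> (vector [t, t powr \<alpha>]) = t)
       \<and> \<not> le_loc (marshall_olkin \<alpha>) (clayton \<theta>)"
proof -
  have P1: "((\<lambda>s. marshall_olkin \<alpha> (s *\<^sub>R w) / s) \<longlongrightarrow> tail_dep (marshall_olkin \<alpha>) w) (at_right 0)
          \<and> ((\<lambda>s. clayton \<theta> (s *\<^sub>R w) / s) \<longlongrightarrow> tail_dep (clayton \<theta>) w) (at_right 0)
          \<and> tail_dep (marshall_olkin \<alpha>) w = 0
          \<and> 0 < tail_dep (clayton \<theta>) w" if w: "\<forall>i. 0 < w $ i" for w :: "real^2"
  proof -
    have w1: "0 < w$1" and w2: "0 < w$2" using w by auto
    have m: "tail_dep (marshall_olkin \<alpha>) w = 0"
      unfolding tail_dep_def using mo_lim[OF assms(2) w1 w2] by (intro tendsto_Lim) auto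
    have c: "tail_dep (clayton \<theta>) w = ((w$1) powr (-\<theta>) + (w$2) powr (-\<theta>)) powr (-1/\<theta>)"
      unfolding tail_dep_def using cl_lim[OF assms(3) w1 w2] by (intro tendsto_Lim) auto
    have pos: "0 < (w$1) powr (-\<theta>) + (w$2) powr (-\<theta>)" using w1 w2 by (intro add_pos_pos) auto
    show ?thesis using m c mo_lim[OF assms(2) w1 w2] cl_lim[OF assms(3) w1 w2] pos by simp
  qed
  have P2: "less_TD (marshall_olkin \<alpha>) (clayton \<theta>)"
    unfolding less_TD_def using P1 by auto
  have P3: "\<forall>t. 0 < t \<and> t < 1 \<longrightarrow>
            clayton \<theta> (vector [t, t powr \<alpha>]) < marshall_olkin \<alpha> (vector [t, t powr \<alpha>])
          \<and> marshall_olkin \<alpha> (vector [t, t powr \<alpha>]) = t"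
    using cl_lt[OF assms(1) assms(3)] mo_t by auto
  have P4: "\<not> le_loc (marshall_olkin \<alpha>) (clayton \<theta>)"
  proof
    assume "le_loc (marshall_olkin \<alpha>) (clayton \<theta>)"
    then obtain e where e: "e > 0" and H: "\<And>u. u \<in> ball 0 e \<and> (\<forall>i. 0 \<le> u $ i \<and> u $ i \<le> 1) \<Longrightarrow>
        marshall_olkin \<alpha> u \<le> clayton \<theta> u"
      unfolding le_loc_def by blast
    have lim: "((\<lambda>t. vector [t, t powr \<alpha>] :: real^2) \<longlongrightarrow> 0) (at_right 0)"
    proof (rule vec_tendstoI)
      fix i :: 2
      have "((\<lambda>t::real. t powr \<alpha>) \<longlongrightarrow> 0) (at_right 0)"
        apply (rule tendsto_zero_powrI[where g="\<lambda>_. \<alpha>" and b=\<alpha>])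
        using assms by (auto intro!: tendsto_eq_intros eventually_at_rightI[of 0 1])
      moreover have "((\<lambda>t::real. t) \<longlongrightarrow> 0) (at_right 0)"
        by (simp add: tendsto_ident_at)
      ultimately show "((\<lambda>t. (vector [t, t powr \<alpha>] :: real^2) $ i) \<longlongrightarrow> 0 $ i) (at_right 0)"
        using exhaust_2[of i] by (auto simp: vector_2)
    qed
    have "\<forall>\<^sub>F t in at_right 0. (vector [t, t powr \<alpha>] :: real^2) \<in> ball 0 e"
      using tendstoD[OF lim e] by (simp add: dist_commute)
    moreover have "\<forall>\<^sub>F t in at_right (0::real). 0 < t \<and> t < 1"
      by (rule eventually_at_rightI[of 0 1]) auto
    ultimately have "\<forall>\<^sub>F t in at_right (0::real). False"
    proof eventually_elim
      case (elim t)
      have "\<forall>i. 0 \<le> (vector [t, t powr \<alpha>] :: real^2) $ i \<and> (vector [t, t powr \<alpha>] :: real^2) $ i \<le> 1"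
      proof
        fix i :: 2
        have "t powr \<alpha> \<le> 1" using elim assms by (intro powr_le1) auto
        then show "0 \<le> (vector [t, t powr \<alpha>] :: real^2) $ i \<and> (vector [t, t powr \<alpha>] :: real^2) $ i \<le> 1"
          using elim exhaust_2[of i] by (auto simp: vector_2)
      qed
      then have "marshall_olkin \<alpha> (vector [t, t powr \<alpha>]) \<le> clayton \<theta> (vector [t, t powr \<alpha>])"
        using H elim by blast
      then show False using P3 elim by force
    qed
    then show False by simp
  qed
  show ?thesis using P1 P2 P3 P4 by blast
qed

end
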